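(* Let $n \geq 1$ be the number of training examples and let $\alpha_0, \beta_0 > 0$ be the parameters of a Beta prior $\textsc{Beta}(\alpha_0,\beta_0)$. Let $\widehat{P}_X \colon \mathbb{R}^d \to [0,1]$ be an estimator of the data density $\mathbb{P}(X=x)$ and $\widehat{P}_{Y|X} \colon \mathbb{R}^d \to [0,1]$ an estimator of the class-conditional probability $\mathbb{P}(Y=1\mid X=x)$, and define the expected anomaly posterior score $$\phi(x) = \frac{\alpha_0 + n\, \widehat{P}_X(x)\, \widehat{P}_{Y|X}(x)}{\alpha_0 + \beta_0 + n\, \widehat{P}_X(x)}.$$ Let $x_{\mathrm{r}}, x_{\mathrm{u}}, x_{\mathrm{i}} \in \mathbb{R}^d$ be, respectively, a realistic, an unrealistic, and an indistinguishable anomaly, and suppose the estimators satisfy the corresponding properties, namely $\widehat{P}_{Y|X}(x_{\mathrm{r}}) \in [0.5,1]$ and $\widehat{P}_X(x_{\mathrm{r}})>0$; $\widehat{P}_{Y|X}(x_{\mathrm{u}}) \in [0.5,1]$ and $\widehat{P}_X(x_{\mathrm{u}})=0$; $\widehat{P}_{Y|X}(x_{\mathrm{i}}) = 0$ and $\widehat{P}_X(x_{\mathrm{i}})>0$. Then $$\frac{\alpha_0}{\alpha_0+\beta_0} < 0.5 \implies \phi(x_{\mathrm{r}}) > \phi(x_{\mathrm{u}}) > \phi(x_{\mathrm{i}}).$$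
   Context: Setting: $X$ is a random feature vector in $\mathbb{R}^d$ and $Y\in\{0,1\}$ a label ($0$ normal, $1$ anomaly). An example $x$ is called a realistic anomaly if $\mathbb{P}(Y=1\mid X=x)\in[0.5,1]$ and $\mathbb{P}(X=x)>0$; an unrealistic anomaly if $\mathbb{P}(Y=1\mid X=x)\in[0.5,1]$ and $\mathbb{P}(X=x)=0$; an indistinguishable anomaly if $\mathbb{P}(Y=1\mid X=x)=0$ and $\mathbb{P}(X=x)>0$. The score $\phi(x)$ is the mean of the posterior $\textsc{Beta}(\alpha_0+\alpha_1,\beta_0+N-\alpha_1)$ of the anomaly probability $p_x$ with pseudo-counts $N = n\widehat{P}_X(x)$ and $\alpha_1 = n\widehat{P}_X(x)\widehat{P}_{Y|X}(x)$. *)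

theory Defs
  imports "HOL-Analysis.Analysis"
begin

text \<open>Expected anomaly posterior score: mean of Beta(alpha0 + alpha1, beta0 + N - alpha1)
  with N = n * PX x and alpha1 = n * PX x * PYX x.\<close>
definition phi :: "nat \<Rightarrow> real \<Rightarrow> real \<Rightarrow> ('x \<Rightarrow> real) \<Rightarrow> ('x \<Rightarrow> real) \<Rightarrow> 'x \<Rightarrow> real" where
  "phi n \<alpha>0 \<beta>0 PX PYX x =
     (\<alpha>0 + real n * PX x * PYX x) / (\<alpha>0 + \<beta>0 + real n * PX x)"

end

theory Submission
  imports Defs
begin

theorem theorem1:
  fixes n :: nat and \<alpha>0 \<beta>0 :: real
    and PX PYX :: "real ^ 'd \<Rightarrow> real"
    and xr xu xi :: "real ^ 'd"
  assumes "n \<ge> 1" and "\<alpha>0 > 0" and "\<beta>0 > 0"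
    and "\<forall>x. PX x \<in> {0..1}" and "\<forall>x. PYX x \<in> {0..1}"
    and "PYX xr \<in> {0.5..1}" and "PX xr > 0"
    and "PYX xu \<in> {0.5..1}" and "PX xu = 0"
    and "PYX xi = 0" and "PX xi > 0"
  shows "\<alpha>0 / (\<alpha>0 + \<beta>0) < 0.5 \<longrightarrow>
    phi n \<alpha>0 \<beta>0 PX PYX xr > phi n \<alpha>0 \<beta>0 PX PYX xu \<and>
    phi n \<alpha>0 \<beta>0 PX PYX xu > phi n \<alpha>0 \<beta>0 PX PYX xi"
proof
  assume h: "\<alpha>0 / (\<alpha>0 + \<beta>0) < 0.5"
  let ?a = \<alpha>0 and ?b = \<beta>0
  define Nr where "Nr = real n * PX xr"
  define Ni where "Ni = real n * PX xi"
  define p where "p = PYX xr"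
  have Nr: "Nr > 0" using assms(1,7) by (simp add: Nr_def)
  have Ni: "Ni > 0" using assms(1,11) by (simp add: Ni_def)
  have p: "p \<ge> 0.5" using assms(6) by (simp add: p_def)
  have ab: "2 * ?a < ?a + ?b" using h assms(2,3) by (simp add: divide_simps)
  have u: "phi n \<alpha>0 \<beta>0 PX PYX xu = ?a / (?a + ?b)" using assms(9) by (simp add: phi_def)
  have r: "phi n \<alpha>0 \<beta>0 PX PYX xr = (?a + Nr * p) / (?a + ?b + Nr)"
    by (simp add: phi_def Nr_def p_def)
  have i: "phi n \<alpha>0 \<beta>0 PX PYX xi = ?a / (?a + ?b + Ni)"
    using assms(10) by (simp add: phi_def Ni_def)
  have "p * (?a + ?b) \<ge> 0.5 * (?a + ?b)"
    using p assms(2,3) by (intro mult_right_mono) auto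
  hence pa: "?a < p * (?a + ?b)" using ab by simp
  have "Nr * ?a < Nr * (p * (?a + ?b))" using pa Nr by simp
  hence "?a * (?a + ?b + Nr) < (?a + Nr * p) * (?a + ?b)"
    by (simp add: algebra_simps)
  hence 1: "?a / (?a + ?b) < (?a + Nr * p) / (?a + ?b + Nr)"
    using Nr assms(2,3) by (simp add: divide_simps)
  have 2: "?a / (?a + ?b + Ni) < ?a / (?a + ?b)"
    using Ni assms(2,3) by (simp add: divide_simps)
  show "phi n \<alpha>0 \<beta>0 PX PYX xr > phi n \<alpha>0 \<beta>0 PX PYX xu \<and>
    phi n \<alpha>0 \<beta>0 PX PYX xu > phi n \<alpha>0 \<beta>0 PX PYX xi"
    using 1 2 u r i by simp
qed

end
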